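(* For all integers $n\ge 3$ and $1<k<n$, the vertex connectivity of $G=H_B(n,k)$ is $\kappa(G)=1$.
   Context: Fix integers $n\ge 2$ and $1\le k<n$ and positive real numbers $x_1<x_2<\dots<x_n$. Let $\mathscr{B}_n=\{\pm x_1,\pm x_2,\dots,\pm x_{n-1},x_n\}$ (so $-x_n\notin\mathscr{B}_n$). Let $\phi(\mathscr{B}_n)$ be the family of all nonempty subsets $S\subseteq\mathscr{B}_n$ whose elements have pairwise distinct absolute values and whose element of largest absolute value is positive. Let $\mathscr{B}_n^+=\{x_1,\dots,x_n\}$, let $V_1$ be the set of all $k$-element subsets of $\mathscr{B}_n^+$, and let $V_2=\phi(\mathscr{B}_n)\setminus V_1$. For $A\in\phi(\mathscr{B}_n)$ put $A^\dagger=\{|a|:a\in A\}$. The bipartite Kneser B type-$k$ graph $H_B(n,k)$ is the simple graph with vertex set $V_1\cup V_2$ in which $X\in V_1$ and $Y\in V_2$ are adjacent if and only if $X\subseteq Y^\dagger$ or $Y^\dagger\subseteq X$, and there are no other edges. *)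

theory Defs
  imports Complex_Main
begin

text \<open>Generic simple-graph notions: a graph is a vertex set V with a symmetric
adjacency predicate E (only edges between vertices of V matter).\<close>

definition graph_connected :: "'a set \<Rightarrow> ('a \<Rightarrow> 'a \<Rightarrow> bool) \<Rightarrow> bool" where
  "graph_connected V E \<longleftrightarrow>
     (\<forall>u\<in>V. \<forall>v\<in>V. (\<lambda>a b. a \<in> V \<and> b \<in> V \<and> E a b)\<^sup>*\<^sup>* u v)"

definition vertex_connectivity :: "'a set \<Rightarrow> ('a \<Rightarrow> 'a \<Rightarrow> bool) \<Rightarrow> nat" where
  "vertex_connectivity V E =
     (LEAST m. \<exists>S. S \<subseteq> V \<and> card S = m \<and>
                  (\<not> graph_connected (V - S) E \<or> card (V - S) \<le> 1))"

definition B_set :: "nat \<Rightarrow> (nat \<Rightarrow> real) \<Rightarrow> real set" where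
  "B_set n x = {x i | i. 1 \<le> i \<and> i \<le> n} \<union> {- x i | i. 1 \<le> i \<and> i \<le> n - 1}"

definition B_plus :: "nat \<Rightarrow> (nat \<Rightarrow> real) \<Rightarrow> real set" where
  "B_plus n x = {x i | i. 1 \<le> i \<and> i \<le> n}"

definition phi_B :: "nat \<Rightarrow> (nat \<Rightarrow> real) \<Rightarrow> real set set" where
  "phi_B n x = {S. S \<noteq> {} \<and> S \<subseteq> B_set n x \<and> inj_on abs S \<and>
                   (\<exists>a\<in>S. a > 0 \<and> (\<forall>b\<in>S. \<bar>b\<bar> \<le> \<bar>a\<bar>))}"

definition HB_V1 :: "nat \<Rightarrow> nat \<Rightarrow> (nat \<Rightarrow> real) \<Rightarrow> real set set" where
  "HB_V1 n k x = {X. X \<subseteq> B_plus n x \<and> card X = k}"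

definition HB_V2 :: "nat \<Rightarrow> nat \<Rightarrow> (nat \<Rightarrow> real) \<Rightarrow> real set set" where
  "HB_V2 n k x = phi_B n x - HB_V1 n k x"

definition HB_vertices :: "nat \<Rightarrow> nat \<Rightarrow> (nat \<Rightarrow> real) \<Rightarrow> real set set" where
  "HB_vertices n k x = HB_V1 n k x \<union> HB_V2 n k x"

definition HB_adj :: "nat \<Rightarrow> nat \<Rightarrow> (nat \<Rightarrow> real) \<Rightarrow> real set \<Rightarrow> real set \<Rightarrow> bool" where
  "HB_adj n k x X Y \<longleftrightarrow>
     (X \<in> HB_V1 n k x \<and> Y \<in> HB_V2 n k x \<and> (X \<subseteq> abs ` Y \<or> abs ` Y \<subseteq> X)) \<or>
     (Y \<in> HB_V1 n k x \<and> X \<in> HB_V2 n k x \<and> (Y \<subseteq> abs ` X \<or> abs ` X \<subseteq> Y))"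

end

theory Submission
  imports Defs
begin

lemma superset_card:
  assumes "finite B" "A \<subseteq> B" "card A \<le> m" "m \<le> card B"
  shows "\<exists>C. A \<subseteq> C \<and> C \<subseteq> B \<and> card C = m"
proof -
  have fA: "finite A" using assms finite_subset by blast
  have "card (B - A) = card B - card A" using assms fA card_Diff_subset by blast
  hence "m - card A \<le> card (B - A)" using assms by linarith
  then obtain D where D: "D \<subseteq> B - A" "card D = m - card A" "finite D"
    by (metis obtain_subset_with_card_n)
  have "card (A \<union> D) = card A + card D"
    using D fA by (subst card_Un_disjoint) auto
  thus ?thesis using D assms by (intro exI[of _ "A \<union> D"]) auto
qed

lemma rtranclp_sym:
  assumes "\<And>a b. R a b \<Longrightarrow> R b a" "R\<^sup>*\<^sup>* a b"
  shows "R\<^sup>*\<^sup>* b a"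
  using assms(2)
proof (induction rule: rtranclp_induct)
  case base then show ?case by simp
next
  case (step y z)
  then show ?case using assms(1) by (meson converse_rtranclp_into_rtranclp)
qed

theorem mainTheorem6:
  fixes n k :: nat and x :: "nat \<Rightarrow> real"
  assumes "n \<ge> 3" and "1 < k" and "k < n"
    and "\<And>i. 1 \<le> i \<Longrightarrow> i \<le> n \<Longrightarrow> x i > 0"
    and "\<And>i j. 1 \<le> i \<Longrightarrow> i < j \<Longrightarrow> j \<le> n \<Longrightarrow> x i < x j"
  shows "vertex_connectivity (HB_vertices n k x) (HB_adj n k x) = 1"
proof -
  note pos = assms(4) and mono = assms(5)
  have le: "x i \<le> x j" if "1 \<le> i" "i \<le> j" "j \<le> n" for i j
    using mono[of i j] that by (cases "i = j") auto
  have inj: "inj_on x {1..n}"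
  proof (rule inj_onI)
    fix i j assume "i \<in> {1..n}" "j \<in> {1..n}" "x i = x j"
    then show "i = j" using mono[of i j] mono[of j i] by (cases i j rule: linorder_cases) auto
  qed
  have Bp: "B_plus n x = x ` {1..n}" unfolding B_plus_def by auto
  have Bs: "B_set n x = x ` {1..n} \<union> uminus ` x ` {1..n-1}" unfolding B_set_def by auto
  have cardBp: "card (B_plus n x) = n" using inj Bp by (simp add: card_image)
  have finBs: "finite (B_set n x)" using Bs by simp
  define V where "V = HB_vertices n k x"
  define E where "E = HB_adj n k x"
  have Vsub: "V \<subseteq> Pow (B_set n x)"
    unfolding V_def HB_vertices_def HB_V1_def HB_V2_def phi_B_def Bs Bp by auto
  have finV: "finite V" using Vsub finBs finite_subset by (meson finite_Pow_iff)
  have absY: "abs ` Y \<subseteq> B_plus n x" if "Y \<subseteq> B_set n x" for Y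
  proof
    fix a assume "a \<in> abs ` Y"
    then obtain b where b: "b \<in> Y" "a = \<bar>b\<bar>" by auto
    then have "b \<in> B_set n x" using that by auto
    then obtain i where i: "1 \<le> i" "i \<le> n" "b = x i \<or> b = - x i" unfolding Bs by auto
    then have "a = x i" using pos[of i] b by auto
    then show "a \<in> B_plus n x" using i Bp by auto
  qed
  have Esym: "\<And>a b. E a b \<Longrightarrow> E b a" unfolding E_def HB_adj_def by blast
  \<comment> \<open>hub\<close>
  define F where "F = B_plus n x"
  have absF: "abs ` F = F"
  proof -
    have "\<forall>a\<in>F. \<bar>a\<bar> = a" unfolding F_def Bp using pos by (auto simp: abs_of_pos)
    then show ?thesis by (metis (no_types, lifting) image_cong image_ident)
  qed
  have Fphi: "F \<in> phi_B n x"
    unfolding phi_B_def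
  proof (intro CollectI conjI)
    show "F \<noteq> {}" unfolding F_def Bp using assms(1) by auto
    show "F \<subseteq> B_set n x" unfolding F_def Bp Bs by auto
    show "inj_on abs F" unfolding F_def Bp using pos by (auto simp: inj_on_def abs_of_pos)
    show "\<exists>a\<in>F. a > 0 \<and> (\<forall>b\<in>F. \<bar>b\<bar> \<le> \<bar>a\<bar>)"
    proof (intro bexI[of _ "x n"] conjI ballI)
      show "x n \<in> F" unfolding F_def Bp using assms(1) by auto
      show "x n > 0" using pos assms(1) by auto
      fix b assume "b \<in> F"
      then obtain i where "1 \<le> i" "i \<le> n" "b = x i" unfolding F_def Bp by auto
      then show "\<bar>b\<bar> \<le> \<bar>x n\<bar>" using pos[of i] pos[of n] le[of i n] by auto
    qed
  qed
  have FV2: "F \<in> HB_V2 n k x"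
    using Fphi cardBp assms(3) unfolding HB_V2_def HB_V1_def F_def by auto
  have FV: "F \<in> V" using FV2 unfolding V_def HB_vertices_def by auto
  define R where "R = (\<lambda>a b. a \<in> V \<and> b \<in> V \<and> E a b)"
  have Rsym: "\<And>a b. R a b \<Longrightarrow> R b a" unfolding R_def using Esym by blast
  have toF: "R\<^sup>*\<^sup>* v F" if v: "v \<in> V" for v
  proof (cases "v \<in> HB_V1 n k x")
    case True
    then have "E v F" using FV2 absF unfolding E_def HB_adj_def HB_V1_def F_def by auto
    then show ?thesis using v FV unfolding R_def by auto
  next
    case False
    then have vV2: "v \<in> HB_V2 n k x" using v unfolding V_def HB_vertices_def by auto
    then have vsub: "v \<subseteq> B_set n x" unfolding HB_V2_def phi_B_def by auto
    have fv: "finite (abs ` v)" using absY[OF vsub] Bp by (metis finite_atLeastAtMost finite_imageI finite_subset)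
    obtain X where X: "X \<subseteq> B_plus n x" "card X = k" "X \<subseteq> abs ` v \<or> abs ` v \<subseteq> X"
    proof (cases "k \<le> card (abs ` v)")
      case True
      then obtain T where "T \<subseteq> abs ` v" "card T = k" by (metis obtain_subset_with_card_n)
      then show ?thesis using that absY[OF vsub] by blast
    next
      case False
      then obtain C where "abs ` v \<subseteq> C" "C \<subseteq> B_plus n x" "card C = k"
        using superset_card[of "B_plus n x" "abs ` v" k] absY[OF vsub] cardBp assms(3) Bp
        by auto
      then show ?thesis using that by blast
    qed
    have XV1: "X \<in> HB_V1 n k x" using X unfolding HB_V1_def by auto
    have XV: "X \<in> V" using XV1 unfolding V_def HB_vertices_def by auto
    have "E v X" using X XV1 vV2 unfolding E_def HB_adj_def by auto
    moreover have "E X F" using XV1 FV2 absF unfolding E_def HB_adj_def HB_V1_def F_def by auto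
    ultimately have "R v X" "R X F" using v XV FV unfolding R_def by auto
    then show ?thesis by auto
  qed
  have conn: "graph_connected V E"
    unfolding graph_connected_def
  proof (intro ballI)
    fix u v assume "u \<in> V" "v \<in> V"
    then have "R\<^sup>*\<^sup>* u F" "R\<^sup>*\<^sup>* F v" using toF rtranclp_sym[of R v F, OF Rsym] by simp_all
    then show "(\<lambda>a b. a \<in> V \<and> b \<in> V \<and> E a b)\<^sup>*\<^sup>* u v" unfolding R_def by auto
  qed
  define G where "G = {x n}"
  have Gphi: "G \<in> phi_B n x" unfolding phi_B_def G_def Bs using assms(1) pos[of n] by auto
  have GV2: "G \<in> HB_V2 n k x" using Gphi assms(2) unfolding HB_V2_def HB_V1_def G_def by auto
  have GV: "G \<in> V" using GV2 unfolding V_def HB_vertices_def by auto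
  have FG: "F \<noteq> G"
  proof
    assume "F = G"
    then have "card F = 1" unfolding G_def by simp
    then show False using cardBp assms(1) unfolding F_def by simp
  qed
  have card2: "\<not> card V \<le> 1"
  proof
    assume "card V \<le> 1"
    moreover have "card {F, G} \<le> card V" using FV GV finV by (intro card_mono) auto
    ultimately show False using FG by simp
  qed
  \<comment> \<open>leaf and cut vertex\<close>
  define X0 where "X0 = x ` {1..k}"
  define Y where "Y = insert (- x 1) (x ` {2..k})"
  define P where "P = x ` {2..k}"
  have Yins: "Y = insert (- x 1) P" unfolding Y_def P_def ..
  have Ppos: "\<forall>a\<in>P. a > 0" unfolding P_def using pos assms by auto
  have absP: "abs ` P = P"
  proof -
    have "\<forall>a\<in>P. \<bar>a\<bar> = a" using Ppos by auto
    then show ?thesis by (metis (no_types, lifting) image_cong image_ident)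
  qed
  have x1pos: "x 1 > 0" using pos[of 1] assms by auto
  have absY0: "abs ` Y = X0"
  proof -
    have "{1..k} = insert 1 {2..k}" using assms(2) by auto
    then have "X0 = insert (x 1) P" unfolding X0_def P_def by simp
    moreover have "abs ` Y = insert (x 1) P" unfolding Yins using absP x1pos by simp
    ultimately show ?thesis by simp
  qed
  have x1P: "x 1 \<notin> P"
  proof
    assume "x 1 \<in> P"
    then obtain i where "2 \<le> i" "i \<le> k" "x 1 = x i" unfolding P_def by auto
    then show False using mono[of 1 i] assms by auto
  qed
  have cardX0: "card X0 = k" unfolding X0_def using inj assms
    by (subst card_image) (auto intro: inj_on_subset)
  have X0V1: "X0 \<in> HB_V1 n k x" unfolding HB_V1_def X0_def Bp using assms cardX0 X0_def by auto
  have X0V: "X0 \<in> V" using X0V1 unfolding V_def HB_vertices_def by auto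
  have negY: "- x 1 \<in> Y" unfolding Y_def by simp
  have Yphi: "Y \<in> phi_B n x"
    unfolding phi_B_def
  proof (intro CollectI conjI)
    show "Y \<noteq> {}" unfolding Y_def by simp
    show "Y \<subseteq> B_set n x" unfolding Y_def Bs using assms by auto
    show "inj_on abs Y"
      unfolding Yins inj_on_insert
    proof
      show "inj_on abs P" using Ppos by (metis abs_of_pos inj_onI)
      show "\<bar>- x 1\<bar> \<notin> abs ` (P - {- x 1})" using absP x1P x1pos by auto
    qed
    show "\<exists>a\<in>Y. a > 0 \<and> (\<forall>b\<in>Y. \<bar>b\<bar> \<le> \<bar>a\<bar>)"
    proof (intro bexI[of _ "x k"] conjI ballI)
      show "x k \<in> Y" unfolding Y_def using assms by auto
      show xk: "x k > 0" using pos assms by auto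
      fix b assume "b \<in> Y"
      then consider "b = - x 1" | i where "2 \<le> i" "i \<le> k" "b = x i" unfolding Y_def by auto
      then show "\<bar>b\<bar> \<le> \<bar>x k\<bar>"
      proof cases
        case 1
        have "x 1 \<le> x k" using le[of 1 k] assms(2,3) by simp
        then show ?thesis using 1 x1pos xk by simp
      next
        case (2 i)
        have "x i \<le> x k" "x i > 0" using le[of i k] pos[of i] assms(3) 2 by auto
        then show ?thesis using 2 xk by simp
      qed
    qed
  qed
  have YnV1: "Y \<notin> HB_V1 n k x"
  proof
    assume "Y \<in> HB_V1 n k x"
    then have "- x 1 \<in> B_plus n x" using negY unfolding HB_V1_def by auto
    then obtain i where "1 \<le> i" "i \<le> n" "- x 1 = x i" unfolding Bp by auto
    then show False using pos[of i] x1pos by auto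
  qed
  have YV2: "Y \<in> HB_V2 n k x" using Yphi YnV1 unfolding HB_V2_def by auto
  have YV: "Y \<in> V" using YV2 unfolding V_def HB_vertices_def by auto
  have onlynb: "Z = X0" if "E Y Z" for Z
  proof -
    have "Z \<in> HB_V1 n k x" "Z \<subseteq> X0 \<or> X0 \<subseteq> Z"
      using that YnV1 absY0 unfolding E_def HB_adj_def by auto
    moreover have "finite X0" unfolding X0_def by simp
    moreover have "finite Z" "card Z = k" using calculation(1) Bp unfolding HB_V1_def
      by (auto intro: finite_subset)
    ultimately show ?thesis using cardX0 card_subset_eq by metis
  qed
  have xnpos: "x n > 0" using pos[of n] assms by auto
  have YG: "Y \<noteq> G" using negY x1pos xnpos unfolding G_def by auto
  have GX0: "G \<noteq> X0" using GV2 X0V1 unfolding HB_V2_def by auto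
  have YX0: "Y \<noteq> X0" using YV2 X0V1 unfolding HB_V2_def by auto
  have disc: "\<not> graph_connected (V - {X0}) E"
  proof
    assume "graph_connected (V - {X0}) E"
    then have "(\<lambda>a b. a \<in> V - {X0} \<and> b \<in> V - {X0} \<and> E a b)\<^sup>*\<^sup>* Y G"
      unfolding graph_connected_def using YV GV YX0 GX0 by auto
    then show False
    proof (cases rule: converse_rtranclpE)
      case base then show ?thesis using YG by simp
    next
      case (step z) then show ?thesis using onlynb by auto
    qed
  qed
  have P1: "\<exists>S. S \<subseteq> V \<and> card S = 1 \<and> (\<not> graph_connected (V - S) E \<or> card (V - S) \<le> 1)"
    using disc X0V by (intro exI[of _ "{X0}"]) auto
  have P0: "\<not> (\<exists>S. S \<subseteq> V \<and> card S = 0 \<and> (\<not> graph_connected (V - S) E \<or> card (V - S) \<le> 1))"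
  proof
    assume "\<exists>S. S \<subseteq> V \<and> card S = 0 \<and> (\<not> graph_connected (V - S) E \<or> card (V - S) \<le> 1)"
    then obtain S where "S \<subseteq> V" "card S = 0" "\<not> graph_connected (V - S) E \<or> card (V - S) \<le> 1" by blast
    moreover then have "S = {}" using finV by (meson card_0_eq finite_subset)
    ultimately show False using conn card2 by auto
  qed
  have "(LEAST m. \<exists>S. S \<subseteq> V \<and> card S = m \<and> (\<not> graph_connected (V - S) E \<or> card (V - S) \<le> 1)) = 1"
  proof (rule Least_equality)
    show "\<exists>S. S \<subseteq> V \<and> card S = 1 \<and> (\<not> graph_connected (V - S) E \<or> card (V - S) \<le> 1)" by (rule P1)
  next
    fix m assume "\<exists>S. S \<subseteq> V \<and> card S = m \<and> (\<not> graph_connected (V - S) E \<or> card (V - S) \<le> 1)"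
    then show "1 \<le> m" using P0 by (cases m) auto
  qed
  then show ?thesis unfolding vertex_connectivity_def V_def E_def .
qed

end
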